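(* If $V$ is a simple abelian intertwining algebra associated to an abelian group $A$ with normalized abelian $3$-cocycle $(F,\Omega)$, then the $V^0$-modules $V^\alpha$ are simple for all $\alpha\in A$. In particular, $V^0$ is a simple vertex operator algebra.
   Context: Normalized abelian $3$-cocycle: $F:A^3\to\mathbb C^\times$, $\Omega:A^2\to\mathbb C^\times$ with $F(\alpha_1,\alpha_2,\alpha_3)F(\alpha_1,\alpha_2+\alpha_3,\alpha_4)F(\alpha_2,\alpha_3,\alpha_4)=F(\alpha_1,\alpha_2,\alpha_3+\alpha_4)F(\alpha_1+\alpha_2,\alpha_3,\alpha_4)$, $F(\alpha_1,\alpha_2,\alpha_3)\Omega(\alpha_1+\alpha_2,\alpha_3)F(\alpha_3,\alpha_1,\alpha_2)=\Omega(\alpha_2,\alpha_3)F(\alpha_1,\alpha_3,\alpha_2)\Omega(\alpha_1,\alpha_3)$, $F(\alpha_1,\alpha_2,\alpha_3)^{-1}\Omega(\alpha_1,\alpha_2+\alpha_3)F(\alpha_2,\alpha_3,\alpha_1)^{-1}=\Omega(\alpha_1,\alpha_2)F(\alpha_2,\alpha_1,\alpha_3)^{-1}\Omega(\alpha_1,\alpha_3)$, and $F=1$ if an argument is $0$. Fix $\hat b$ with $e^{2\pi i\hat b(\alpha_1,\alpha_2)}=\Omega(\alpha_1,\alpha_2)\Omega(\alpha_2,\alpha_1)$, $B(\alpha_1,\alpha_2,\alpha_3)=F(\alpha_1,\alpha_2,\alpha_3)\Omega(\alpha_1,\alpha_2)F(\alpha_2,\alpha_1,\alpha_3)^{-1}$.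 An abelian intertwining algebra associated to $(A,F,\Omega)$: $A\times\mathbb C$-graded $V=\bigoplus V^\alpha_{(n)}$ (for each $\alpha$ and $R\in\mathbb R$, $V^\alpha_{(n)}=0$ for all but finitely many $n$ with $\mathrm{Re}\,n\le R$), $Y(v,x)=\sum_{n\in\mathbb C}v_nx^{-n-1}$, $\mathbf 1\in V^0_{(0)}$, $\omega\in V^0_{(2)}$, with $x^{\hat b(\alpha_1,\alpha_2)}Y(v_1,x)v_2\in V^{\alpha_1+\alpha_2}((x))$ for $v_i\in V^{\alpha_i}$; $Y(\mathbf 1,x)=\mathrm{id}$, $Y(v,x)\mathbf 1\in V[[x]]$ with constant term $v$; Jacobi identity $x_0^{-1}\big(\tfrac{x_1-x_2}{x_0}\big)^{\hat b(\alpha_1,\alpha_2)}\delta\big(\tfrac{x_1-x_2}{x_0}\big)Y(v_1,x_1)Y(v_2,x_2)v_3-B(\alpha_1,\alpha_2,\alpha_3)x_0^{-1}\big(\tfrac{x_2-x_1}{e^{\pi i}x_0}\big)^{\hat b(\alpha_1,\alpha_2)}\delta\big(\tfrac{x_2-x_1}{-x_0}\big)Y(v_2,x_2)Y(v_1,x_1)v_3=F(\alpha_1,\alpha_2,\alpha_3)x_1^{-1}\big(\tfrac{x_2+x_0}{x_1}\big)^{\hat b(\alpha_1,\alpha_3)}\delta\big(\tfrac{x_2+x_0}{x_1}\big)Y(Y(v_1,x_0)v_2,x_2)v_3$; $Y(\omega,x)=\sum L(n)x^{-n-2}$ satisfies the Virasoro relations and $V_{(n)}=\bigoplus_\alpha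 V^\alpha_{(n)}$ is the $L(0)$-eigenspace of eigenvalue $n$; $Y(L(-1)v,x)=\frac{d}{dx}Y(v,x)$. $V^\alpha=\bigoplus_nV^\alpha_{(n)}$; $V^0$ is a vertex operator algebra and each $V^\alpha$ a $V^0$-module. $V$ is simple if the only $A$-graded subspaces closed under all $v_n$, $v\in V$, $n\in\mathbb C$, are $0$ and $V$. *)

theory Defs
  imports "HOL-Analysis.Analysis"
begin

text \<open>Complex vector spaces are modelled by the locale module with scalar
multiplication sc :: complex => 'v => 'v; the whole space V is UNIV :: 'v set.\<close>

definition normalized_abelian_3_cocycle ::
  "('a::ab_group_add \<Rightarrow> 'a \<Rightarrow> 'a \<Rightarrow> complex) \<Rightarrow> ('a \<Rightarrow> 'a \<Rightarrow> complex) \<Rightarrow> bool" where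
  "normalized_abelian_3_cocycle F \<Omega> \<longleftrightarrow>
     (\<forall>a b c. F a b c \<noteq> 0) \<and> (\<forall>a b. \<Omega> a b \<noteq> 0) \<and>
     (\<forall>a1 a2 a3 a4.
        F a1 a2 a3 * F a1 (a2 + a3) a4 * F a2 a3 a4
          = F a1 a2 (a3 + a4) * F (a1 + a2) a3 a4) \<and>
     (\<forall>a1 a2 a3.
        F a1 a2 a3 * \<Omega> (a1 + a2) a3 * F a3 a1 a2
          = \<Omega> a2 a3 * F a1 a3 a2 * \<Omega> a1 a3) \<and>
     (\<forall>a1 a2 a3.
        inverse (F a1 a2 a3) * \<Omega> a1 (a2 + a3) * inverse (F a2 a3 a1)
          = \<Omega> a1 a2 * inverse (F a2 a1 a3) * \<Omega> a1 a3) \<and>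
     (\<forall>a b. F 0 a b = 1 \<and> F a 0 b = 1 \<and> F a b 0 = 1)"

definition Bfun ::
  "('a \<Rightarrow> 'a \<Rightarrow> 'a \<Rightarrow> complex) \<Rightarrow> ('a \<Rightarrow> 'a \<Rightarrow> complex) \<Rightarrow> 'a \<Rightarrow> 'a \<Rightarrow> 'a \<Rightarrow> complex" where
  "Bfun F \<Omega> a1 a2 a3 = F a1 a2 a3 * \<Omega> a1 a2 * inverse (F a2 a1 a3)"

text \<open>Sum over the (finite) support of a function nat => 'v.  In the Jacobi identity
all these sums have finite support by the truncation axiom.\<close>
definition fsum :: "(nat \<Rightarrow> 'v::ab_group_add) \<Rightarrow> 'v" where
  "fsum f = (\<Sum>k\<in>{k. f k \<noteq> 0}. f k)"

definition internal_direct_sum :: "(complex \<Rightarrow> 'v::ab_group_add \<Rightarrow> 'v) \<Rightarrow> ('i \<Rightarrow> 'v set) \<Rightarrow> bool" where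
  "internal_direct_sum sc G \<longleftrightarrow>
     (\<forall>i. module.subspace sc (G i)) \<and>
     (\<forall>v. \<exists>I u. finite I \<and> (\<forall>i\<in>I. u i \<in> G i) \<and> v = (\<Sum>i\<in>I. u i)) \<and>
     (\<forall>I u. finite I \<longrightarrow> (\<forall>i\<in>I. u i \<in> G i) \<longrightarrow> (\<Sum>i\<in>I. u i) = 0 \<longrightarrow> (\<forall>i\<in>I. u i = 0))"

definition Vpart :: "(complex \<Rightarrow> 'v::ab_group_add \<Rightarrow> 'v) \<Rightarrow> ('a \<Rightarrow> complex \<Rightarrow> 'v set) \<Rightarrow> 'a \<Rightarrow> 'v set" where
  "Vpart sc Vg a = module.span sc (\<Union>n. Vg a n)"

definition A_graded_subspace :: "(complex \<Rightarrow> 'v::ab_group_add \<Rightarrow> 'v) \<Rightarrow> ('a \<Rightarrow> complex \<Rightarrow> 'v set) \<Rightarrow> 'v set \<Rightarrow> bool" where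
  "A_graded_subspace sc Vg W \<longleftrightarrow> module.subspace sc W \<and>
     (\<forall>w\<in>W. \<exists>I u. finite I \<and> (\<forall>a\<in>I. u a \<in> W \<inter> Vpart sc Vg a) \<and> w = (\<Sum>a\<in>I. u a))"

text \<open>Abelian intertwining algebra associated to (A,F,Omega), with fixed bhat.
  mode v n w is v_n w, where Y(v,x) w = sum_n (v_n w) x^(-n-1).
  The Jacobi identity is stated coefficientwise: the coefficient of
  x0^(-n-b-1) x1^(-r-1) x2^(-s-1)  (n integer, r s complex) of each term,
  where b = bhat a1 a2, c = bhat a1 a3 (all x0-exponents occurring lie in -b-1+Z
  by the truncation axiom).\<close>
definition abelian_intertwining_algebra ::
  "(complex \<Rightarrow> 'v::ab_group_add \<Rightarrow> 'v) \<Rightarrow> ('a::ab_group_add \<Rightarrow> complex \<Rightarrow> 'v set)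
   \<Rightarrow> ('v \<Rightarrow> complex \<Rightarrow> 'v \<Rightarrow> 'v) \<Rightarrow> 'v \<Rightarrow> 'v
   \<Rightarrow> ('a \<Rightarrow> 'a \<Rightarrow> 'a \<Rightarrow> complex) \<Rightarrow> ('a \<Rightarrow> 'a \<Rightarrow> complex) \<Rightarrow> ('a \<Rightarrow> 'a \<Rightarrow> complex) \<Rightarrow> bool" where
  "abelian_intertwining_algebra sc Vg mode vac \<omega> F \<Omega> bhat \<longleftrightarrow>
     module sc \<and>
     normalized_abelian_3_cocycle F \<Omega> \<and>
     (\<forall>a1 a2. exp (2 * pi * \<i> * bhat a1 a2) = \<Omega> a1 a2 * \<Omega> a2 a1) \<and>
     \<comment> \<open>grading\<close>
     internal_direct_sum sc (\<lambda>(a, n). Vg a n) \<and>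
     (\<forall>a (R::real). finite {n. Re n \<le> R \<and> Vg a n \<noteq> {0}}) \<and>
     \<comment> \<open>vertex operators are bilinear\<close>
     (\<forall>v n. module_hom sc sc (mode v n)) \<and>
     (\<forall>v w n u. mode (v + w) n u = mode v n u + mode w n u) \<and>
     (\<forall>c v n u. mode (sc c v) n u = sc c (mode v n u)) \<and>
     \<comment> \<open>truncation: x^bhat(a1,a2) Y(v1,x) v2 in V^(a1+a2)((x))\<close>
     (\<forall>a1 a2 v1 v2. v1 \<in> Vpart sc Vg a1 \<longrightarrow> v2 \<in> Vpart sc Vg a2 \<longrightarrow>
        (\<forall>p. mode v1 p v2 \<in> Vpart sc Vg (a1 + a2)) \<and>
        (\<forall>p. mode v1 p v2 \<noteq> 0 \<longrightarrow> p - bhat a1 a2 \<in> \<int>) \<and>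
        (\<exists>N::real. \<forall>p. N < Re p \<longrightarrow> mode v1 p v2 = 0)) \<and>
     \<comment> \<open>vacuum\<close>
     vac \<in> Vg 0 0 \<and>
     (\<forall>n u. mode vac n u = (if n = -1 then u else 0)) \<and>
     (\<forall>v n. (\<nexists>k::nat. n = - of_nat k - 1) \<longrightarrow> mode v n vac = 0) \<and>
     (\<forall>v. mode v (-1) vac = v) \<and>
     \<comment> \<open>Jacobi identity\<close>
     (\<forall>a1 a2 a3 v1 v2 v3 (n::int) r s.
        v1 \<in> Vpart sc Vg a1 \<longrightarrow> v2 \<in> Vpart sc Vg a2 \<longrightarrow> v3 \<in> Vpart sc Vg a3 \<longrightarrow>
        (let b = bhat a1 a2; c = bhat a1 a3 in
          fsum (\<lambda>k. sc (((of_int n + b) gchoose k) * (-1) ^ k)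
                       (mode v1 (r + of_int n + b - of_nat k) (mode v2 (s + of_nat k) v3)))
          - sc (Bfun F \<Omega> a1 a2 a3 * exp (- pi * \<i> * (of_int n + b)))
              (fsum (\<lambda>k. sc (((of_int n + b) gchoose k) * (-1) ^ k)
                       (mode v2 (s + of_int n + b - of_nat k) (mode v1 (r + of_nat k) v3))))
          = (if r - c \<in> \<int> then
               sc (F a1 a2 a3)
                 (fsum (\<lambda>j. sc (r gchoose j)
                     (mode (mode v1 (of_int n + b + of_nat j) v2) (s + r - of_nat j) v3)))
             else 0))) \<and>
     \<comment> \<open>conformal vector: L(m) = omega_(m+1)\<close>
     \<omega> \<in> Vg 0 2 \<and>
     (\<exists>cc::complex. \<forall>(m::int) (k::int) u.
        mode \<omega> (of_int m + 1) (mode \<omega> (of_int k + 1) u)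
        - mode \<omega> (of_int k + 1) (mode \<omega> (of_int m + 1) u)
        = sc (of_int (m - k)) (mode \<omega> (of_int (m + k) + 1) u)
          + (if m + k = 0 then sc ((of_int m ^ 3 - of_int m) / 12 * cc) u else 0)) \<and>
     (\<forall>n. {v. mode \<omega> 1 v = sc n v} = module.span sc (\<Union>a. Vg a n)) \<and>
     \<comment> \<open>L(-1)-derivative property: Y(L(-1)v,x) = d/dx Y(v,x)\<close>
     (\<forall>v m u. mode (mode \<omega> 0 v) m u = sc (- m) (mode v (m - 1) u))"

definition simple_AIA :: "(complex \<Rightarrow> 'v::ab_group_add \<Rightarrow> 'v) \<Rightarrow> ('a \<Rightarrow> complex \<Rightarrow> 'v set)
   \<Rightarrow> ('v \<Rightarrow> complex \<Rightarrow> 'v \<Rightarrow> 'v) \<Rightarrow> bool" where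
  "simple_AIA sc Vg mode \<longleftrightarrow>
     (\<forall>W. A_graded_subspace sc Vg W \<longrightarrow> (\<forall>v n w. w \<in> W \<longrightarrow> mode v n w \<in> W)
          \<longrightarrow> W = {0} \<or> W = UNIV)"

definition simple_V0_module :: "(complex \<Rightarrow> 'v::ab_group_add \<Rightarrow> 'v) \<Rightarrow> ('a::ab_group_add \<Rightarrow> complex \<Rightarrow> 'v set)
   \<Rightarrow> ('v \<Rightarrow> complex \<Rightarrow> 'v \<Rightarrow> 'v) \<Rightarrow> 'a \<Rightarrow> bool" where
  "simple_V0_module sc Vg mode a \<longleftrightarrow>
     (\<forall>U. module.subspace sc U \<longrightarrow> U \<subseteq> Vpart sc Vg a \<longrightarrow>
          (\<forall>v\<in>Vpart sc Vg 0. \<forall>n. \<forall>u\<in>U. mode v n u \<in> U)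
          \<longrightarrow> U = {0} \<or> U = Vpart sc Vg a)"

end

theory Submission
  imports Defs
begin

lemma (in module) fin_sums_subspace:
  assumes "\<And>a. subspace (G a)"
  shows "subspace {y. \<exists>I g. finite I \<and> (\<forall>a\<in>I. g a \<in> G a) \<and> y = sum g I}"
proof (rule subspaceI)
  show "0 \<in> {y. \<exists>I g. finite I \<and> (\<forall>a\<in>I. g a \<in> G a) \<and> y = sum g I}"
    by (rule CollectI, rule exI[of _ "{}"]) auto
next
  fix x y assume "x \<in> {y. \<exists>I g. finite I \<and> (\<forall>a\<in>I. g a \<in> G a) \<and> y = sum g I}"
    "y \<in> {y. \<exists>I g. finite I \<and> (\<forall>a\<in>I. g a \<in> G a) \<and> y = sum g I}"
  then obtain I1 g1 I2 g2 where h: "finite I1" "\<forall>a\<in>I1. g1 a \<in> G a" "x = sum g1 I1"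
    "finite I2" "\<forall>a\<in>I2. g2 a \<in> G a" "y = sum g2 I2" by blast
  define g where "g a = (if a \<in> I1 then g1 a else 0) + (if a \<in> I2 then g2 a else 0)" for a
  have e1: "(\<Sum>a\<in>I1 \<union> I2. if a \<in> I1 then g1 a else 0) = sum g1 ((I1 \<union> I2) \<inter> I1)"
    using h by (intro sum.inter_restrict[symmetric]) simp
  have e2: "(\<Sum>a\<in>I1 \<union> I2. if a \<in> I2 then g2 a else 0) = sum g2 ((I1 \<union> I2) \<inter> I2)"
    using h by (intro sum.inter_restrict[symmetric]) simp
  have "sum g (I1 \<union> I2) = sum g1 ((I1 \<union> I2) \<inter> I1) + sum g2 ((I1 \<union> I2) \<inter> I2)"
    unfolding g_def sum.distrib e1 e2 ..
  also have "\<dots> = x + y" using h by (simp add: Int_absorb1)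
  finally have "x + y = sum g (I1 \<union> I2)" by simp
  moreover have "\<forall>a\<in>I1 \<union> I2. g a \<in> G a"
    using h assms unfolding g_def by (auto intro!: subspace_add simp: subspace_0)
  ultimately show "x + y \<in> {y. \<exists>I g. finite I \<and> (\<forall>a\<in>I. g a \<in> G a) \<and> y = sum g I}"
    using h(1,4) by (intro CollectI exI[of _ "I1 \<union> I2"] exI[of _ g] conjI) auto
next
  fix c x assume "x \<in> {y. \<exists>I g. finite I \<and> (\<forall>a\<in>I. g a \<in> G a) \<and> y = sum g I}"
  then obtain I g where h: "finite I" "\<forall>a\<in>I. g a \<in> G a" "x = sum g I" by blast
  have "scale c x = sum (\<lambda>a. scale c (g a)) I" using h by (simp add: scale_sum_right)
  moreover have "\<forall>a\<in>I. scale c (g a) \<in> G a" using h assms by (auto intro: subspace_scale)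
  ultimately show "scale c x \<in> {y. \<exists>I g. finite I \<and> (\<forall>a\<in>I. g a \<in> G a) \<and> y = sum g I}"
    using h(1) by (intro CollectI exI[of _ I] exI[of _ "\<lambda>a. scale c (g a)"] conjI) auto
qed

locale aia =
  fixes sc :: "complex \<Rightarrow> 'v::ab_group_add \<Rightarrow> 'v"
    and Vg :: "'a::ab_group_add \<Rightarrow> complex \<Rightarrow> 'v set"
    and mode :: "'v \<Rightarrow> complex \<Rightarrow> 'v \<Rightarrow> 'v"
    and vac \<omega> :: 'v
    and F :: "'a \<Rightarrow> 'a \<Rightarrow> 'a \<Rightarrow> complex"
    and \<Omega> bhat :: "'a \<Rightarrow> 'a \<Rightarrow> complex"
  assumes AIA: "abelian_intertwining_algebra sc Vg mode vac \<omega> F \<Omega> bhat"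
begin

lemma Mod: "module sc" using AIA unfolding abelian_intertwining_algebra_def by blast

sublocale module sc by (rule Mod)

lemma hom: "module_hom sc sc (mode v n)"
proof -
  have "\<forall>v n. module_hom sc sc (mode v n)"
    using AIA unfolding abelian_intertwining_algebra_def by (elim conjE) assumption
  then show ?thesis by blast
qed

lemma addL: "mode (v + w) n u = mode v n u + mode w n u"
proof -
  have "\<forall>v w n u. mode (v + w) n u = mode v n u + mode w n u"
    using AIA unfolding abelian_intertwining_algebra_def by (elim conjE) assumption
  then show ?thesis by blast
qed

lemma ids: "internal_direct_sum sc (\<lambda>(a, n). Vg a n)"
  using AIA unfolding abelian_intertwining_algebra_def by (elim conjE) assumption

lemma trunc:
  assumes "v1 \<in> Vpart sc Vg a1" "v2 \<in> Vpart sc Vg a2"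
  shows "mode v1 p v2 \<in> Vpart sc Vg (a1 + a2)" "\<exists>N::real. \<forall>p. N < Re p \<longrightarrow> mode v1 p v2 = 0"
proof -
  have "\<forall>a1 a2 v1 v2. v1 \<in> Vpart sc Vg a1 \<longrightarrow> v2 \<in> Vpart sc Vg a2 \<longrightarrow>
        (\<forall>p. mode v1 p v2 \<in> Vpart sc Vg (a1 + a2)) \<and>
        (\<forall>p. mode v1 p v2 \<noteq> 0 \<longrightarrow> p - bhat a1 a2 \<in> \<int>) \<and>
        (\<exists>N::real. \<forall>p. N < Re p \<longrightarrow> mode v1 p v2 = 0)"
    using AIA unfolding abelian_intertwining_algebra_def by (elim conjE) assumption
  then show "mode v1 p v2 \<in> Vpart sc Vg (a1 + a2)" "\<exists>N::real. \<forall>p. N < Re p \<longrightarrow> mode v1 p v2 = 0"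
    using assms by blast+
qed

lemma vac: "vac \<in> Vg 0 0" "mode vac (-1) u = u"
proof -
  have "vac \<in> Vg 0 0"
    using AIA unfolding abelian_intertwining_algebra_def by (elim conjE) assumption
  moreover have "\<forall>n u. mode vac n u = (if n = -1 then u else 0)"
    using AIA unfolding abelian_intertwining_algebra_def by (elim conjE) assumption
  ultimately show "vac \<in> Vg 0 0" "mode vac (-1) u = u" by auto
qed

lemma jacobi:
  assumes "v1 \<in> Vpart sc Vg a1" "v2 \<in> Vpart sc Vg a2" "v3 \<in> Vpart sc Vg a3"
  shows "fsum (\<lambda>k. sc (((of_int n + bhat a1 a2) gchoose k) * (-1) ^ k)
                       (mode v1 (r + of_int n + bhat a1 a2 - of_nat k) (mode v2 (s + of_nat k) v3)))
          - sc (Bfun F \<Omega> a1 a2 a3 * exp (- pi * \<i> * (of_int n + bhat a1 a2)))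
              (fsum (\<lambda>k. sc (((of_int n + bhat a1 a2) gchoose k) * (-1) ^ k)
                       (mode v2 (s + of_int n + bhat a1 a2 - of_nat k) (mode v1 (r + of_nat k) v3))))
          = (if r - bhat a1 a3 \<in> \<int> then
               sc (F a1 a2 a3)
                 (fsum (\<lambda>j. sc (r gchoose j)
                     (mode (mode v1 (of_int n + bhat a1 a2 + of_nat j) v2) (s + r - of_nat j) v3)))
             else 0)"
proof -
  have J: "\<forall>a1 a2 a3 v1 v2 v3 (n::int) r s.
        v1 \<in> Vpart sc Vg a1 \<longrightarrow> v2 \<in> Vpart sc Vg a2 \<longrightarrow> v3 \<in> Vpart sc Vg a3 \<longrightarrow>
        (let b = bhat a1 a2; c = bhat a1 a3 in
          fsum (\<lambda>k. sc (((of_int n + b) gchoose k) * (-1) ^ k)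
                       (mode v1 (r + of_int n + b - of_nat k) (mode v2 (s + of_nat k) v3)))
          - sc (Bfun F \<Omega> a1 a2 a3 * exp (- pi * \<i> * (of_int n + b)))
              (fsum (\<lambda>k. sc (((of_int n + b) gchoose k) * (-1) ^ k)
                       (mode v2 (s + of_int n + b - of_nat k) (mode v1 (r + of_nat k) v3))))
          = (if r - c \<in> \<int> then
               sc (F a1 a2 a3)
                 (fsum (\<lambda>j. sc (r gchoose j)
                     (mode (mode v1 (of_int n + b + of_nat j) v2) (s + r - of_nat j) v3)))
             else 0))"
    using AIA unfolding abelian_intertwining_algebra_def by (elim conjE) assumption
  show ?thesis
    using J[THEN spec[of _ a1], THEN spec[of _ a2], THEN spec[of _ a3], THEN spec[of _ v1],
      THEN spec[of _ v2], THEN spec[of _ v3], THEN spec[of _ n], THEN spec[of _ r], THEN spec[of _ s],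
      THEN mp, THEN mp, THEN mp, OF assms] unfolding Let_def .
qed

lemma mode0R[simp]: "mode v n 0 = 0"
  using module_hom.zero[OF hom] by blast

lemma mode0L[simp]: "mode 0 n u = 0"
  using addL[of 0 0 n u] by simp

lemma modesumL: "mode (sum f I) n u = (\<Sum>i\<in>I. mode (f i) n u)"
  by (induction I rule: infinite_finite_induct) (auto simp: addL)

lemma modesumR: "mode v n (sum f I) = (\<Sum>i\<in>I. mode v n (f i))"
  using module_hom.sum[OF hom] by blast

lemma Vpart_sub: "subspace (Vpart sc Vg a)"
  unfolding Vpart_def by simp

lemma Vg_sub: "subspace (Vg a n)"
  using ids unfolding internal_direct_sum_def by (metis case_prod_conv)

lemma Vg_Vpart: "x \<in> Vg a n \<Longrightarrow> x \<in> Vpart sc Vg a"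
  unfolding Vpart_def by (rule span_base) blast

lemma fsum_in: "subspace T \<Longrightarrow> (\<And>k. f k \<in> T) \<Longrightarrow> fsum f \<in> T"
  unfolding fsum_def by (rule subspace_sum) auto

lemma Vpart_repr:
  assumes "y \<in> Vpart sc Vg a"
  shows "\<exists>J q. finite J \<and> (\<forall>n. q n \<in> Vg a n) \<and> (\<forall>n. n \<notin> J \<longrightarrow> q n = 0) \<and> y = sum q J"
  using assms unfolding Vpart_def
proof (induction rule: span_induct_alt)
  case base
  show ?case by (rule exI[of _ "{}"], rule exI[of _ "\<lambda>_. 0"]) (auto intro: subspace_0 Vg_sub)
next
  case (step c x y)
  then obtain n0 where x: "x \<in> Vg a n0" by blast
  from step obtain J q where h: "finite J" "\<forall>n. q n \<in> Vg a n" "\<forall>n. n \<notin> J \<longrightarrow> q n = 0" "y = sum q J"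
    by blast
  define q' where "q' = q(n0 := sc c x + q n0)"
  have "sum q' (insert n0 J) = q' n0 + sum q' (J - {n0})"
    using h by (simp add: sum.insert_remove)
  also have "sum q' (J - {n0}) = sum q (J - {n0})"
    unfolding q'_def by (rule sum.cong) auto
  also have "q' n0 + sum q (J - {n0}) = sc c x + (q n0 + sum q (J - {n0}))"
    unfolding q'_def by (simp add: add.assoc)
  also have "q n0 + sum q (J - {n0}) = sum q J"
  proof (cases "n0 \<in> J")
    case True then show ?thesis using h by (simp add: sum.remove)
  next
    case False then show ?thesis using h by simp
  qed
  finally have "sc c x + y = sum q' (insert n0 J)" using h by simp
  moreover have "\<forall>n. q' n \<in> Vg a n"
    using h x unfolding q'_def by (auto intro!: subspace_add subspace_scale Vg_sub)
  moreover have "\<forall>n. n \<notin> insert n0 J \<longrightarrow> q' n = 0" using h unfolding q'_def by auto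
  ultimately show ?case using h by blast
qed

lemma indep:
  assumes "finite I" "\<forall>a\<in>I. p a \<in> Vpart sc Vg a" "sum p I = 0"
  shows "\<forall>a\<in>I. p a = 0"
proof -
  have "\<forall>a\<in>I. \<exists>J q. finite J \<and> (\<forall>n. q n \<in> Vg a n) \<and> (\<forall>n. n \<notin> J \<longrightarrow> q n = 0) \<and> p a = sum q J"
    using assms(2) Vpart_repr by blast
  then have "\<forall>a\<in>I. \<exists>Jq. finite (fst Jq) \<and> (\<forall>n. snd Jq n \<in> Vg a n) \<and> p a = sum (snd Jq) (fst Jq)"
    by (metis fst_conv snd_conv)
  from bchoice[OF this] obtain f where f: "\<forall>a\<in>I. finite (fst (f a)) \<and> (\<forall>n. snd (f a) n \<in> Vg a n) \<and> p a = sum (snd (f a)) (fst (f a))"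
    by blast
  define J where "J a = fst (f a)" for a
  define q where "q a = snd (f a)" for a
  have h: "\<forall>a\<in>I. finite (J a) \<and> (\<forall>n. q a n \<in> Vg a n) \<and> p a = sum (q a) (J a)"
    using f unfolding J_def q_def by blast
  have "sum (\<lambda>(a, n). q a n) (Sigma I J) = sum p I"
    using h assms(1) by (simp add: sum.Sigma[symmetric])
  then have z: "sum (\<lambda>(a, n). q a n) (Sigma I J) = 0" using assms(3) by simp
  have fin: "finite (Sigma I J)" using h assms(1) by auto
  have mem: "\<forall>i\<in>Sigma I J. (\<lambda>(a, n). q a n) i \<in> (\<lambda>(a, n). Vg a n) i" using h by auto
  have "\<forall>i\<in>Sigma I J. (\<lambda>(a, n). q a n) i = 0"
  proof -
    have "\<forall>I u. finite I \<longrightarrow> (\<forall>i\<in>I. u i \<in> (\<lambda>(a, n). Vg a n) i) \<longrightarrow> sum u I = 0 \<longrightarrow> (\<forall>i\<in>I. u i = 0)"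
      using ids unfolding internal_direct_sum_def by (elim conjE) assumption
    then show ?thesis using fin mem z by blast
  qed
  then show ?thesis using h by auto
qed

lemma decomp: "\<exists>(I :: ('a \<times> complex) set) u. finite I \<and> (\<forall>i\<in>I. u i \<in> Vpart sc Vg (fst i)) \<and> v = sum u I"
proof -
  obtain I u where hI: "finite I" "\<forall>i\<in>I. u i \<in> (\<lambda>(a, n). Vg a n) i" "v = sum u I"
  proof -
    have "\<forall>v. \<exists>I u. finite I \<and> (\<forall>i\<in>I. u i \<in> (\<lambda>(a, n). Vg a n) i) \<and> v = sum u I"
      using ids unfolding internal_direct_sum_def by (elim conjE) assumption
    then show ?thesis using that by blast
  qed
  have "\<forall>i\<in>I. u i \<in> Vpart sc Vg (fst i)"
  proof
    fix i assume "i \<in> I"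
    then have "u i \<in> Vg (fst i) (snd i)" using hI by (cases i) auto
    then show "u i \<in> Vpart sc Vg (fst i)" by (rule Vg_Vpart)
  qed
  then show ?thesis using hI by blast
qed

lemma assoc_span:
  assumes T: "subspace T"
    and z: "z \<in> Vpart sc Vg \<gamma>" and x: "x \<in> Vpart sc Vg \<beta>" and u: "u \<in> Vpart sc Vg \<alpha>"
    and gen: "\<And>y q. y \<in> Vpart sc Vg (\<gamma> + \<beta>) \<Longrightarrow> mode y q u \<in> T"
  shows "mode z m (mode x s u) \<in> T"
proof -
  obtain Nx where Nx: "\<forall>p. Nx < Re p \<longrightarrow> mode x p u = 0" using trunc(2)[OF x u] by blast
  obtain Nz where Nz: "\<forall>p. Nz < Re p \<longrightarrow> mode z p u = 0" using trunc(2)[OF z u] by blast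
  have main: "\<forall>s. Nx - real d < Re s \<longrightarrow> (\<forall>m. mode z m (mode x s u) \<in> T)" for d
  proof (induction d)
    case 0
    show ?case using Nx T by (auto simp: subspace_0)
  next
    case (Suc d)
    show ?case
    proof (intro allI impI)
      fix s m assume s: "Nx - real (Suc d) < Re s"
      have IH: "mode z m' (mode x (s + of_nat k) u) \<in> T" if "k \<ge> 1" for k m'
        using Suc.IH s that by auto
      define b where "b = bhat \<gamma> \<beta>"
      define n :: int where "n = \<lfloor>Re (m - b) - Nz\<rfloor> - 1"
      define r where "r = m - of_int n - b"
      have rN: "Nz < Re r"
      proof -
        have "real_of_int n \<le> Re (m - b) - Nz - 1" unfolding n_def by linarith
        then show ?thesis unfolding r_def by simp
      qed
      define f where "f k = sc (((of_int n + b) gchoose k) * (-1) ^ k)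
                       (mode z (r + of_int n + b - of_nat k) (mode x (s + of_nat k) u))" for k
      have J: "fsum f - sc (Bfun F \<Omega> \<gamma> \<beta> \<alpha> * exp (- pi * \<i> * (of_int n + b)))
              (fsum (\<lambda>k. sc (((of_int n + b) gchoose k) * (-1) ^ k)
                       (mode x (s + of_int n + b - of_nat k) (mode z (r + of_nat k) u))))
          = (if r - bhat \<gamma> \<alpha> \<in> \<int> then
               sc (F \<gamma> \<beta> \<alpha>)
                 (fsum (\<lambda>j. sc (r gchoose j)
                     (mode (mode z (of_int n + b + of_nat j) x) (s + r - of_nat j) u)))
             else 0)"
        unfolding f_def b_def by (rule jacobi[OF z x u])
      have zero: "(\<lambda>k. sc (((of_int n + b) gchoose k) * (-1) ^ k)
                       (mode x (s + of_int n + b - of_nat k) (mode z (r + of_nat k) u))) = (\<lambda>k. 0)"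
      proof
        fix k :: nat
        have "Nz < Re (r + of_nat k)" using rN by simp
        then show "sc (((of_int n + b) gchoose k) * (-1) ^ k)
                       (mode x (s + of_int n + b - of_nat k) (mode z (r + of_nat k) u)) = 0"
          using Nz by simp
      qed
      have RHS: "(if r - bhat \<gamma> \<alpha> \<in> \<int> then
               sc (F \<gamma> \<beta> \<alpha>)
                 (fsum (\<lambda>j. sc (r gchoose j)
                     (mode (mode z (of_int n + b + of_nat j) x) (s + r - of_nat j) u)))
             else 0) \<in> T"
      proof -
        have "fsum (\<lambda>j. sc (r gchoose j)
                     (mode (mode z (of_int n + b + of_nat j) x) (s + r - of_nat j) u)) \<in> T"
          by (rule fsum_in[OF T]) (intro subspace_scale[OF T] gen trunc(1)[OF z x])
        then show ?thesis using T by (auto intro: subspace_scale subspace_0)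
      qed
      have fz: "fsum (\<lambda>k::nat. 0::'v) = 0" unfolding fsum_def by simp
      have fT: "fsum f \<in> T" using J RHS unfolding zero fz by simp
      define K where "K = nat \<lceil>Nx - Re s\<rceil>"
      have supp: "{k. f k \<noteq> 0} \<subseteq> {..K}"
      proof
        fix k assume "k \<in> {k. f k \<noteq> 0}"
        then have "mode x (s + of_nat k) u \<noteq> 0" unfolding f_def by auto
        then have "Re (s + of_nat k) \<le> Nx" using Nx by force
        then show "k \<in> {..K}" unfolding K_def by simp linarith
      qed
      have "fsum f = sum f {..K}"
        unfolding fsum_def by (rule sum.mono_neutral_left) (use supp in auto)
      also have "{..K} = insert 0 {Suc 0..K}" by auto
      also have "sum f (insert 0 {Suc 0..K}) = f 0 + sum f {Suc 0..K}" by simp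
      finally have eq: "f 0 = fsum f - sum f {Suc 0..K}" by simp
      have sT: "sum f {Suc 0..K} \<in> T"
        by (rule subspace_sum[OF T]) (auto simp: f_def intro!: subspace_scale[OF T] IH)
      have "f 0 \<in> T" unfolding eq by (rule subspace_diff[OF T fT sT])
      moreover have "f 0 = mode z m (mode x s u)" unfolding f_def r_def by simp
      ultimately show "mode z m (mode x s u) \<in> T" by simp
    qed
  qed
  have "Nx - real (nat \<lceil>Nx - Re s\<rceil> + 1) < Re s" by linarith
  then show ?thesis using main by blast
qed

lemma simple_part:
  assumes simple: "simple_AIA sc Vg mode"
    and U: "subspace U" "U \<subseteq> Vpart sc Vg \<alpha>"
    and cl: "\<forall>v\<in>Vpart sc Vg 0. \<forall>n. \<forall>u\<in>U. mode v n u \<in> U"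
    and u0: "u0 \<in> U" "u0 \<noteq> 0"
  shows "U = Vpart sc Vg \<alpha>"
proof -
  define G where "G a = span {y. \<exists>x n u \<beta>. y = mode x n u \<and> x \<in> Vpart sc Vg \<beta> \<and> \<beta> + \<alpha> = a \<and> u \<in> U}" for a
  define W where "W = {y. \<exists>I g. finite I \<and> (\<forall>a\<in>I. g a \<in> G a) \<and> y = sum g I}"
  have Gsub: "subspace (G a)" for a unfolding G_def by simp
  have GV: "G a \<subseteq> Vpart sc Vg a" for a
    unfolding G_def
  proof (rule span_minimal[OF _ Vpart_sub])
    show "{y. \<exists>x n u \<beta>. y = mode x n u \<and> x \<in> Vpart sc Vg \<beta> \<and> \<beta> + \<alpha> = a \<and> u \<in> U} \<subseteq> Vpart sc Vg a"
      using U(2) trunc(1) by blast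
  qed
  have GW: "G a \<subseteq> W" for a
  proof
    fix y assume "y \<in> G a"
    then show "y \<in> W" unfolding W_def
      by (intro CollectI exI[of _ "{a}"] exI[of _ "\<lambda>_. y"]) auto
  qed
  have Wsub: "subspace W" unfolding W_def by (rule fin_sums_subspace[OF Gsub])
  have UG: "U \<subseteq> G \<alpha>"
  proof
    fix u assume u: "u \<in> U"
    have "vac \<in> Vpart sc Vg 0" using vac(1) by (rule Vg_Vpart)
    then have "mode vac (-1) u \<in> G \<alpha>" unfolding G_def using u
      by (intro span_base) force
    then show "u \<in> G \<alpha>" using vac(2) by simp
  qed
  have GU: "G \<alpha> \<subseteq> U"
    unfolding G_def
  proof (rule span_minimal[OF _ U(1)])
    show "{y. \<exists>x n u \<beta>. y = mode x n u \<and> x \<in> Vpart sc Vg \<beta> \<and> \<beta> + \<alpha> = \<alpha> \<and> u \<in> U} \<subseteq> U"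
      using cl by auto
  qed
  have modeG: "mode z m y \<in> G (\<gamma> + a)" if z: "z \<in> Vpart sc Vg \<gamma>" and y: "y \<in> G a" for z m y \<gamma> a
  proof -
    have sub: "subspace {y. mode z m y \<in> G (\<gamma> + a)}"
      using module_hom.subspace_vimage[OF hom Gsub] by (simp add: vimage_def)
    have "G a \<subseteq> {y. mode z m y \<in> G (\<gamma> + a)}"
      unfolding G_def[of a]
    proof (rule span_minimal[OF _ sub])
      show "{y. \<exists>x n u \<beta>. y = mode x n u \<and> x \<in> Vpart sc Vg \<beta> \<and> \<beta> + \<alpha> = a \<and> u \<in> U}
            \<subseteq> {y. mode z m y \<in> G (\<gamma> + a)}"
      proof
        fix y assume "y \<in> {y. \<exists>x n u \<beta>. y = mode x n u \<and> x \<in> Vpart sc Vg \<beta> \<and> \<beta> + \<alpha> = a \<and> u \<in> U}"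
        then obtain x n u \<beta> where h: "y = mode x n u" "x \<in> Vpart sc Vg \<beta>" "\<beta> + \<alpha> = a" "u \<in> U"
          by blast
        have "mode z m (mode x n u) \<in> G (\<gamma> + a)"
        proof (rule assoc_span[OF Gsub z h(2)])
          show "u \<in> Vpart sc Vg \<alpha>" using h(4) U(2) by blast
          fix y' q assume "y' \<in> Vpart sc Vg (\<gamma> + \<beta>)"
          then show "mode y' q u \<in> G (\<gamma> + a)" unfolding G_def using h
            by (intro span_base CollectI exI[of _ y'] exI[of _ q] exI[of _ u] exI[of _ "\<gamma> + \<beta>"])
              (simp add: add.assoc)
        qed
        then show "y \<in> {y. mode z m y \<in> G (\<gamma> + a)}" using h by simp
      qed
    qed
    then show ?thesis using y by blast
  qed
  have Wcl: "\<forall>v n w. w \<in> W \<longrightarrow> mode v n w \<in> W"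
  proof (intro allI impI)
    fix v n w assume "w \<in> W"
    then obtain I g where h: "finite I" "\<forall>a\<in>I. g a \<in> G a" "w = sum g I" unfolding W_def by blast
    obtain J :: "('a \<times> complex) set" and z where hz: "finite J" "\<forall>i\<in>J. z i \<in> Vpart sc Vg (fst i)" "v = sum z J"
      using decomp[of v] by (elim exE conjE) blast
    have "mode v n w = (\<Sum>a\<in>I. \<Sum>i\<in>J. mode (z i) n (g a))"
      unfolding h(3) hz(3) modesumL modesumR ..
    also have "\<dots> \<in> W"
    proof (intro subspace_sum[OF Wsub])
      fix a i assume "a \<in> I" "i \<in> J"
      then have "mode (z i) n (g a) \<in> G (fst i + a)" using h hz by (intro modeG) auto
      then show "mode (z i) n (g a) \<in> W" using GW by blast
    qed
    finally show "mode v n w \<in> W" .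
  qed
  have Wgr: "A_graded_subspace sc Vg W"
    unfolding A_graded_subspace_def
  proof (intro conjI ballI)
    show "subspace W" by (rule Wsub)
    fix w assume "w \<in> W"
    then obtain I g where h: "finite I" "\<forall>a\<in>I. g a \<in> G a" "w = sum g I" unfolding W_def by blast
    have "\<forall>a\<in>I. g a \<in> W \<inter> Vpart sc Vg a" using h(2) GW GV by blast
    then show "\<exists>I u. finite I \<and> (\<forall>a\<in>I. u a \<in> W \<inter> Vpart sc Vg a) \<and> w = sum u I"
      using h(1,3) by (intro exI[of _ I] exI[of _ g]) simp
  qed
  have "W = {0} \<or> W = UNIV" using simple Wgr Wcl unfolding simple_AIA_def by blast
  moreover have "u0 \<in> W" using u0 UG GW by blast
  ultimately have WU: "W = UNIV" using u0 by auto
  have "Vpart sc Vg \<alpha> \<subseteq> U"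
  proof
    fix y assume y: "y \<in> Vpart sc Vg \<alpha>"
    have "y \<in> W" using WU by simp
    then obtain I g where h: "finite I" "\<forall>a\<in>I. g a \<in> G a" "y = sum g I" unfolding W_def by blast
    define g' where "g' a = (if a \<in> I then g a else 0)" for a
    have g'G: "g' a \<in> G a" for a unfolding g'_def using h Gsub by (auto simp: subspace_0)
    have sg': "sum g' (insert \<alpha> I) = y"
    proof -
      have "sum g' (insert \<alpha> I) = sum g' I"
        by (cases "\<alpha> \<in> I") (auto simp: g'_def h(1) insert_absorb)
      also have "\<dots> = sum g I" unfolding g'_def by (rule sum.cong) auto
      finally show ?thesis using h by simp
    qed
    define p where "p a = g' a - (if a = \<alpha> then y else 0)" for a
    have "sum p (insert \<alpha> I) = sum g' (insert \<alpha> I) - sum (\<lambda>a. if a = \<alpha> then y else 0) (insert \<alpha> I)"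
      unfolding p_def by (rule sum_subtractf)
    also have "\<dots> = 0" using sg' h(1) by simp
    finally have "sum p (insert \<alpha> I) = 0" .
    moreover have "\<forall>a\<in>insert \<alpha> I. p a \<in> Vpart sc Vg a"
      unfolding p_def using g'G GV y by (auto intro!: subspace_diff[OF Vpart_sub] simp: subspace_0[OF Vpart_sub])
    ultimately have "p \<alpha> = 0" using indep[of "insert \<alpha> I" p] h(1) by blast
    then have "y = g' \<alpha>" unfolding p_def by simp
    then show "y \<in> U" using g'G GU by blast
  qed
  then show ?thesis using U(2) by blast
qed

end

theorem mainTheorem14:
  fixes sc :: "complex \<Rightarrow> 'v::ab_group_add \<Rightarrow> 'v"
    and Vg :: "'a::ab_group_add \<Rightarrow> complex \<Rightarrow> 'v set"
    and mode :: "'v \<Rightarrow> complex \<Rightarrow> 'v \<Rightarrow> 'v"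
    and vac \<omega> :: 'v
    and F :: "'a \<Rightarrow> 'a \<Rightarrow> 'a \<Rightarrow> complex"
    and \<Omega> bhat :: "'a \<Rightarrow> 'a \<Rightarrow> complex"
  assumes "abelian_intertwining_algebra sc Vg mode vac \<omega> F \<Omega> bhat"
    and "simple_AIA sc Vg mode"
  shows "\<forall>a. simple_V0_module sc Vg mode a"
proof -
  interpret aia sc Vg mode vac \<omega> F \<Omega> bhat by (unfold_locales) (rule assms(1))
  show ?thesis unfolding simple_V0_module_def
  proof (intro allI impI)
    fix a U
    assume U: "module.subspace sc U" "U \<subseteq> Vpart sc Vg a"
      and cl: "\<forall>v\<in>Vpart sc Vg 0. \<forall>n. \<forall>u\<in>U. mode v n u \<in> U"
    show "U = {0} \<or> U = Vpart sc Vg a"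
    proof (cases "U = {0}")
      case False
      then obtain u0 where "u0 \<in> U" "u0 \<noteq> 0" using subspace_0[OF U(1)] by blast
      then show ?thesis using simple_part[OF assms(2) U cl] by blast
    qed simp
  qed
qed

end
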